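(* Every almost reciprocal Puiseux monoid is a length-finite-factorization monoid (LFFM).
   Context: A Puiseux monoid is an additive submonoid of $(\mathbb{Q}_{\ge 0},+)$. An almost reciprocal Puiseux monoid is a monoid of the form $\langle \frac{c_n}{d_n} \mid n \in \mathbb{N} \rangle$, where $(d_n)_{n\ge 1}$ is a strictly increasing sequence of positive integers whose terms are pairwise relatively prime, and $(c_n)_{n \ge 1}$ is a sequence of positive integers with $\gcd(c_n,d_n)=1$ for every $n$. An atom of $M$ is a nonzero element $a$ such that $a=x+y$ with $x,y\in M$ forces $x=0$ or $y=0$; $M$ is atomic if each element is a finite sum of atoms. For nonzero $x \in M$, a factorization of $x$ is a formal (unordered) sum $a_1+\dots+a_\ell$ of atoms whose value is $x$, of length $\ell$; $\mathsf{Z}(x,\ell)$ denotes the set of factorizations of $x$ of length $\ell$. $M$ is an LFFM if $M$ is atomic and $\mathsf{Z}(x,\ell)$ is finite for every nonzero $x \in M$ and every $\ell \in \mathbb{N}$. *)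

theory Defs
  imports Complex_Main "HOL-Library.Multiset"
begin

inductive_set gen_monoid :: "rat set \<Rightarrow> rat set" for S :: "rat set" where
  zero: "0 \<in> gen_monoid S"
| gen_add: "s \<in> S \<Longrightarrow> x \<in> gen_monoid S \<Longrightarrow> s + x \<in> gen_monoid S"

definition puiseux_monoid :: "rat set \<Rightarrow> bool" where
  "puiseux_monoid M \<longleftrightarrow> (\<exists>S. (\<forall>s\<in>S. s \<ge> 0) \<and> M = gen_monoid S)"

definition almost_reciprocal_pm :: "rat set \<Rightarrow> bool" where
  "almost_reciprocal_pm M \<longleftrightarrow>
     (\<exists>c d :: nat \<Rightarrow> nat.
        strict_mono d \<and> (\<forall>n. 0 < d n) \<and> (\<forall>m n. m \<noteq> n \<longrightarrow> coprime (d m) (d n)) \<and>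
        (\<forall>n. 0 < c n) \<and> (\<forall>n. coprime (c n) (d n)) \<and>
        M = gen_monoid (range (\<lambda>n. of_nat (c n) / of_nat (d n))))"

definition atoms :: "rat set \<Rightarrow> rat set" where
  "atoms M = {a \<in> M. a \<noteq> 0 \<and> (\<forall>x\<in>M. \<forall>y\<in>M. a = x + y \<longrightarrow> x = 0 \<or> y = 0)}"

definition atomic :: "rat set \<Rightarrow> bool" where
  "atomic M \<longleftrightarrow> (\<forall>x\<in>M. \<exists>z. set_mset z \<subseteq> atoms M \<and> sum_mset z = x)"

definition factorizations_len :: "rat set \<Rightarrow> rat \<Rightarrow> nat \<Rightarrow> rat multiset set" where
  "factorizations_len M x l = {z. set_mset z \<subseteq> atoms M \<and> sum_mset z = x \<and> size z = l}"

definition LFFM :: "rat set \<Rightarrow> bool" where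
  "LFFM M \<longleftrightarrow> atomic M \<and> (\<forall>x\<in>M. x \<noteq> 0 \<longrightarrow> (\<forall>l. finite (factorizations_len M x l)))"

end

theory Submission
  imports Defs
begin

lemma gen_monoid_iff:
  "x \<in> gen_monoid (range g) \<longleftrightarrow> (\<exists>K. x = sum_mset (image_mset g K))"
proof
  assume "x \<in> gen_monoid (range g)"
  then show "\<exists>K. x = sum_mset (image_mset g K)"
  proof induction
    case zero
    then show ?case by (intro exI[of _ "{#}"]) simp
  next
    case (gen_add s x)
    then obtain K i where "x = sum_mset (image_mset g K)" "s = g i" by auto
    then show ?case by (intro exI[of _ "add_mset i K"]) simp
  qed
next
  assume "\<exists>K. x = sum_mset (image_mset g K)"
  then obtain K where "x = sum_mset (image_mset g K)" by blast
  moreover have "sum_mset (image_mset g K) \<in> gen_monoid (range g)"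
    by (induction K) (auto intro: gen_monoid.intros)
  ultimately show "x \<in> gen_monoid (range g)" by simp
qed

lemma sum_count:
  fixes g :: "nat \<Rightarrow> rat"
  assumes "finite S" "set_mset K \<subseteq> S"
  shows "sum_mset (image_mset g K) = (\<Sum>i\<in>S. of_nat (count K i) * g i)"
  using assms(2)
proof (induction K)
  case empty
  then show ?case by simp
next
  case (add a K)
  then have aS: "a \<in> S" by simp
  have "(\<Sum>i\<in>S. of_nat (count (add_mset a K) i) * g i)
      = (\<Sum>i\<in>S. of_nat (count K i) * g i + (if i = a then g i else 0))"
    by (rule sum.cong) (auto simp: algebra_simps)
  also have "\<dots> = (\<Sum>i\<in>S. of_nat (count K i) * g i) + g a"
    using aS assms(1) by (simp add: sum.distrib)
  finally show ?case using add by simp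
qed

lemma mset_from_range:
  assumes "set_mset z \<subseteq> range g"
  shows "\<exists>K. z = image_mset g K"
  using assms
proof (induction z)
  case empty
  then show ?case by (intro exI[of _ "{#}"]) simp
next
  case (add a z)
  then obtain K i where "z = image_mset g K" "a = g i" by auto
  then show ?case by (intro exI[of _ "add_mset i K"]) simp
qed

locale arpm =
  fixes c d :: "nat \<Rightarrow> nat"
  assumes smd: "strict_mono d" and dpos: "\<And>n. 0 < d n"
    and dcop: "\<And>m n. m \<noteq> n \<Longrightarrow> coprime (d m) (d n)"
    and cpos: "\<And>n. 0 < c n" and cdcop: "\<And>n. coprime (c n) (d n)"
begin

definition g :: "nat \<Rightarrow> rat" where "g n = of_nat (c n) / of_nat (d n)"

lemma g_pos: "g n > 0"
  using cpos dpos by (simp add: g_def)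

lemma sum_nonneg: "sum_mset (image_mset g K) \<ge> 0"
  by (induction K) (auto intro: add_nonneg_nonneg less_imp_le g_pos)

lemma residue:
  assumes "sum_mset (image_mset g K) = sum_mset (image_mset g K')"
  shows "int (d n) dvd int (count K n) - int (count K' n)"
proof -
  define S where "S = insert n (set_mset K \<union> set_mset K')"
  have fS: "finite S" by (simp add: S_def)
  define e where "e i = int (count K i) - int (count K' i)" for i
  have "(\<Sum>i\<in>S. of_nat (count K i) * g i) = (\<Sum>i\<in>S. of_nat (count K' i) * g i)"
  proof -
    have "set_mset K \<subseteq> S" "set_mset K' \<subseteq> S" by (auto simp: S_def)
    then have a: "sum_mset (image_mset g K) = (\<Sum>i\<in>S. of_nat (count K i) * g i)"
      and b: "sum_mset (image_mset g K') = (\<Sum>i\<in>S. of_nat (count K' i) * g i)"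
      using sum_count[OF fS, of K g] sum_count[OF fS, of K' g] by blast+
    show ?thesis using a b assms by linarith
  qed
  then have "(\<Sum>i\<in>S. of_int (e i) * g i) = 0"
    by (simp add: e_def algebra_simps sum_subtractf)
  then have "of_nat (\<Prod>j\<in>S. d j) * (\<Sum>i\<in>S. of_int (e i) * g i) = (0::rat)" by simp
  moreover have "of_nat (\<Prod>j\<in>S. d j) * (\<Sum>i\<in>S. of_int (e i) * g i)
     = (\<Sum>i\<in>S. of_int (e i * c i * (\<Prod>j\<in>S-{i}. d j)) :: rat)"
    unfolding sum_distrib_left
  proof (rule sum.cong)
    fix i assume "i \<in> S"
    then have "(\<Prod>j\<in>S. d j) = d i * (\<Prod>j\<in>S-{i}. d j)"
      using fS by (simp add: prod.remove)
    then show "of_nat (\<Prod>j\<in>S. d j) * (of_int (e i) * g i)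
       = (of_int (e i * c i * (\<Prod>j\<in>S-{i}. d j)) :: rat)"
      using dpos[of i] by (simp add: g_def field_simps)
  qed simp
  ultimately have "(\<Sum>i\<in>S. of_int (e i * c i * (\<Prod>j\<in>S-{i}. d j)) :: rat) = 0"
    by argo
  then have "(of_int (\<Sum>i\<in>S. e i * c i * (\<Prod>j\<in>S-{i}. d j)) :: rat) = 0"
    by (simp only: of_int_sum)
  then have eq: "(\<Sum>i\<in>S. e i * c i * (\<Prod>j\<in>S-{i}. d j)) = 0"
    by (simp only: of_int_eq_0_iff)
  have nS: "n \<in> S" by (simp add: S_def)
  define P where "P = (\<Prod>j\<in>S-{n}. int (d j))"
  define R where "R = (\<Sum>i\<in>S-{n}. e i * c i * (\<Prod>j\<in>S-{i}. d j))"
  have dec: "(\<Sum>i\<in>S. e i * c i * (\<Prod>j\<in>S-{i}. d j)) = e n * c n * P + R"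
    using fS nS by (simp add: sum.remove P_def R_def of_nat_prod)
  have dR: "int (d n) dvd R"
    unfolding R_def
  proof (rule dvd_sum)
    fix i assume "i \<in> S - {n}"
    then have "n \<in> S - {i}" using nS by auto
    then have "int (d n) dvd (\<Prod>j\<in>S-{i}. int (d j))" using fS by (intro dvd_prodI) auto
    then show "int (d n) dvd e i * c i * (\<Prod>j\<in>S-{i}. d j)" by (simp add: of_nat_prod)
  qed
  have "e n * c n * P = - R" using dec eq by linarith
  then have "e n * (c n * P) = - R" by (simp only: mult.assoc)
  then have d1: "int (d n) dvd e n * (c n * P)" using dR by simp
  have "coprime (d n) (\<Prod>j\<in>S-{n}. d j)"
    by (rule prod_coprime_right, rule dcop) auto
  then have cp1: "coprime (int (d n)) (int (\<Prod>j\<in>S-{n}. d j))"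
    by (simp only: coprime_int_iff)
  have "P = int (\<Prod>j\<in>S-{n}. d j)" unfolding P_def by (simp only: of_nat_prod)
  then have "coprime (int (d n)) P" using cp1 by (simp only:)
  moreover have "coprime (int (d n)) (int (c n))"
    using cdcop[of n] by (simp add: coprime_commute)
  ultimately have "coprime (int (d n)) (int (c n) * P)" by simp
  then have "int (d n) dvd e n" using d1 by (simp add: coprime_dvd_mult_left_iff)
  then show ?thesis by (simp add: e_def)
qed

abbreviation Mg where "Mg \<equiv> gen_monoid (range g)"

lemma sum_ge_elem:
  assumes "i \<in># K" shows "sum_mset (image_mset g K) \<ge> g i"
proof -
  obtain K0 where "K = add_mset i K0" using assms by (metis mset_add)
  then show ?thesis using sum_nonneg[of K0] by simp
qed

lemma atoms_sub: "atoms Mg \<subseteq> range g"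
proof
  fix a assume a: "a \<in> atoms Mg"
  then have aM: "a \<in> Mg" and a0: "a \<noteq> 0"
    and at: "\<forall>x\<in>Mg. \<forall>y\<in>Mg. a = x + y \<longrightarrow> x = 0 \<or> y = 0"
    unfolding atoms_def by simp_all
  obtain K where K: "a = sum_mset (image_mset g K)"
    using aM gen_monoid_iff by blast
  have "K \<noteq> {#}" using a0 K by auto
  then obtain i K0 where K0: "K = add_mset i K0" by (metis multiset_cases)
  have m1: "g i \<in> Mg" using gen_monoid_iff[of "g i" g, THEN iffD2, OF exI[of _ "{#i#}"]] by simp
  have m2: "sum_mset (image_mset g K0) \<in> Mg"
    using gen_monoid_iff by blast
  have aeq: "a = g i + sum_mset (image_mset g K0)" using K K0 by simp
  have "g i = 0 \<or> sum_mset (image_mset g K0) = 0"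
    using at[rule_format, OF m1 m2 aeq] .
  then have "sum_mset (image_mset g K0) = 0" using g_pos[of i] by simp
  then have "a = g i" using aeq by simp
  then show "a \<in> range g" by simp
qed

lemma atom_g:
  assumes "d n > 1" shows "g n \<in> atoms Mg"
proof -
  have m: "g n \<in> Mg" using gen_monoid_iff[of "g n" g, THEN iffD2, OF exI[of _ "{#n#}"]] by simp
  have nz: "g n \<noteq> 0" using g_pos[of n] by simp
  have "x = 0 \<or> y = 0" if x: "x \<in> Mg" and y: "y \<in> Mg" and xy: "g n = x + y" for x y
  proof -
  obtain Kx where Kx: "x = sum_mset (image_mset g Kx)" using x gen_monoid_iff by blast
  obtain Ky where Ky: "y = sum_mset (image_mset g Ky)" using y gen_monoid_iff by blast
  have "sum_mset (image_mset g (Kx + Ky)) = sum_mset (image_mset g {#n#})"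
    using xy Kx Ky by simp
  from residue[OF this, of n]
  have dv: "int (d n) dvd int (count (Kx + Ky) n) - 1" by simp
  show "x = 0 \<or> y = 0"
  proof (cases "n \<in># Kx + Ky")
    case True
    then have "n \<in># Kx \<or> n \<in># Ky" by simp
    then show ?thesis
    proof
      assume "n \<in># Kx"
      then have "x \<ge> g n" using sum_ge_elem Kx by blast
      moreover have "y \<ge> 0" using sum_nonneg Ky by simp
      ultimately show ?thesis using xy by auto
    next
      assume "n \<in># Ky"
      then have "y \<ge> g n" using sum_ge_elem Ky by blast
      moreover have "x \<ge> 0" using sum_nonneg Kx by simp
      ultimately show ?thesis using xy by auto
    qed
  next
    case False
    then have "int (d n) dvd 1" using dv by (simp add: not_in_iff)
    then show ?thesis using assms by simp
  qed
  qed
  then show ?thesis using m nz unfolding atoms_def by blast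
qed

lemma gen_atomic: "\<exists>z. set_mset z \<subseteq> atoms Mg \<and> sum_mset z = g i"
proof (cases "g i \<in> atoms Mg")
  case True
  then show ?thesis by (intro exI[of _ "{#g i#}"]) simp
next
  case False
  then have "\<not> d i > 1" using atom_g[of i] by blast
  then have "d i = 1" using dpos[of i] by linarith
  have gi: "g i \<in> Mg" using gen_monoid_iff[of "g i" g, THEN iffD2, OF exI[of _ "{#i#}"]] by simp
  from False gi g_pos[of i] obtain x y where x: "x \<in> Mg" and y: "y \<in> Mg" and xy: "g i = x + y"
    and nz: "x \<noteq> 0" "y \<noteq> 0"
  proof -
    have "\<not> (\<forall>x\<in>Mg. \<forall>y\<in>Mg. g i = x + y \<longrightarrow> x = 0 \<or> y = 0)"
      using False gi g_pos[of i] unfolding atoms_def by auto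
    then show ?thesis using that by blast
  qed
  obtain Kx where Kx: "x = sum_mset (image_mset g Kx)" using x gen_monoid_iff by blast
  obtain Ky where Ky: "y = sum_mset (image_mset g Ky)" using y gen_monoid_iff by blast
  have "i \<notin># Kx + Ky"
  proof
    assume "i \<in># Kx + Ky"
    then have "i \<in># Kx \<or> i \<in># Ky" by simp
    then show False
    proof
      assume "i \<in># Kx"
      then have "x \<ge> g i" using sum_ge_elem Kx by blast
      moreover have "y \<ge> 0" using sum_nonneg Ky by simp
      ultimately show False using xy nz by auto
    next
      assume "i \<in># Ky"
      then have "y \<ge> g i" using sum_ge_elem Ky by blast
      moreover have "x \<ge> 0" using sum_nonneg Kx by simp
      ultimately show False using xy nz by auto
    qed
  qed
  have "set_mset (image_mset g (Kx + Ky)) \<subseteq> atoms Mg"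
  proof
    fix a assume "a \<in> set_mset (image_mset g (Kx + Ky))"
    then obtain j where j: "j \<in># Kx + Ky" "a = g j" by auto
    then have "j \<noteq> i" using \<open>i \<notin># Kx + Ky\<close> by auto
    then have "d j \<noteq> d i" using strict_mono_eq[OF smd] by simp
    then have "d j > 1" using \<open>d i = 1\<close> dpos[of j] by linarith
    then show "a \<in> atoms Mg" using atom_g j by simp
  qed
  moreover have "sum_mset (image_mset g (Kx + Ky)) = g i" using xy Kx Ky by simp
  ultimately show ?thesis by blast
qed

lemma Mg_atomic: "atomic Mg"
  unfolding atomic_def
proof
  fix x assume "x \<in> Mg"
  then obtain K where K: "x = sum_mset (image_mset g K)" using gen_monoid_iff by blast
  have "\<exists>z. set_mset z \<subseteq> atoms Mg \<and> sum_mset z = sum_mset (image_mset g K)"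
  proof (induction K)
    case empty
    then show ?case by (intro exI[of _ "{#}"]) simp
  next
    case (add i K)
    then obtain z where z: "set_mset z \<subseteq> atoms Mg" "sum_mset z = sum_mset (image_mset g K)" by blast
    obtain w where w: "set_mset w \<subseteq> atoms Mg" "sum_mset w = g i" using gen_atomic by blast
    show ?case using z w by (intro exI[of _ "z + w"]) (auto simp: add.commute)
  qed
  then show "\<exists>z. set_mset z \<subseteq> atoms Mg \<and> sum_mset z = x" using K by simp
qed

lemma finite_bounded_msets:
  assumes "finite A"
  shows "finite {z :: 'a multiset. set_mset z \<subseteq> A \<and> size z = l}"
proof -
  have "{z. set_mset z \<subseteq> A \<and> size z = l} \<subseteq> mset ` {xs. set xs \<subseteq> A \<and> length xs = l}"
  proof
    fix z assume "z \<in> {z. set_mset z \<subseteq> A \<and> size z = l}"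
    moreover obtain xs where "mset xs = z" using ex_mset by blast
    ultimately show "z \<in> mset ` {xs. set xs \<subseteq> A \<and> length xs = l}"
      by (intro image_eqI[of _ _ xs]) auto
  qed
  moreover have "finite {xs. set xs \<subseteq> A \<and> length xs = l}"
    using finite_lists_length_eq[OF assms] by simp
  ultimately show ?thesis by (meson finite_imageI finite_subset)
qed

lemma finite_fact:
  assumes "x \<in> Mg" shows "finite (factorizations_len Mg x l)"
proof -
  obtain K0 where K0: "x = sum_mset (image_mset g K0)" using assms gen_monoid_iff by blast
  define A where "A = g ` ({i. d i \<le> l} \<union> set_mset K0)"
  have "finite {i. d i \<le> l}"
  proof (rule finite_subset)
    show "{i. d i \<le> l} \<subseteq> {..l}"
    proof
      fix i assume "i \<in> {i. d i \<le> l}"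
      then show "i \<in> {..l}" using strict_mono_imp_increasing[OF smd, of i] by simp
    qed
  qed simp
  then have fA: "finite A" by (simp add: A_def)
  have "factorizations_len Mg x l \<subseteq> {z. set_mset z \<subseteq> A \<and> size z = l}"
  proof
    fix z assume z: "z \<in> factorizations_len Mg x l"
    then have zat: "set_mset z \<subseteq> atoms Mg" and zs: "sum_mset z = x" and zl: "size z = l"
      unfolding factorizations_len_def by auto
    have "set_mset z \<subseteq> range g" using zat atoms_sub by (rule subset_trans)
    then obtain K where K: "z = image_mset g K" using mset_from_range by blast
    have "set_mset z \<subseteq> A"
    proof
      fix a assume "a \<in># z"
      then obtain i where i: "i \<in># K" "a = g i" using K by auto
      have "i \<in> {i. d i \<le> l} \<union> set_mset K0"
      proof (rule ccontr)
        assume "\<not> ?thesis"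
        then have dl: "d i > l" and nK0: "count K0 i = 0" by (auto simp: not_in_iff)
        have "sum_mset (image_mset g K) = sum_mset (image_mset g K0)" using K zs K0 by simp
        from residue[OF this, of i] nK0 have dv: "d i dvd count K i" by simp
        have "count K i \<le> size K" by (rule count_le_size)
        moreover have "size K = l" using K zl by simp
        moreover have "count K i > 0" using i by simp
        moreover have "d i \<le> count K i" using dvd_imp_le[OF dv] \<open>count K i > 0\<close> by simp
        ultimately show False using dl by linarith
      qed
      then show "a \<in> A" using i by (auto simp: A_def)
    qed
    then show "z \<in> {z. set_mset z \<subseteq> A \<and> size z = l}" using zl by simp
  qed
  then show ?thesis using finite_bounded_msets[OF fA] finite_subset by blast
qed

lemma Mg_LFFM: "LFFM Mg"
  unfolding LFFM_def using Mg_atomic finite_fact by simp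

end

theorem corollary4p11:
  fixes M :: "rat set"
  assumes "almost_reciprocal_pm M"
  shows "LFFM M"
proof -
  obtain c d :: "nat \<Rightarrow> nat" where
    h: "strict_mono d" "\<forall>n. 0 < d n" "\<forall>m n. m \<noteq> n \<longrightarrow> coprime (d m) (d n)"
       "\<forall>n. 0 < c n" "\<forall>n. coprime (c n) (d n)"
       "M = gen_monoid (range (\<lambda>n. of_nat (c n) / of_nat (d n)))"
    using assms unfolding almost_reciprocal_pm_def by blast
  interpret arpm c d using h by unfold_locales auto
  have "M = Mg" using h(6) by (simp add: g_def[abs_def])
  then show ?thesis using Mg_LFFM by simp
qed

end
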